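(* Let $R$ be the final object of $\mathrm{Coalg}(\mathbf{Sgp},\mathbf{Sgp})$, with underlying semigroup $\langle x_{00},x_{11},p_i,q_i\ (i\in\omega)\mid x_{00}^2=x_{00},\ x_{11}^2=x_{11},\ x_{00}p_i=p_i=p_ix_{11},\ x_{11}q_i=q_i=q_ix_{00}\rangle$. Let $S$ be an object of $\mathrm{Coalg}(\mathbf{Sgp},\mathbf{Sgp})$ such that the unique morphism $S\to R$ sends every element of $|S|$ to $x_{00}$. Then $S$ is isomorphic to a cosemigroup obtained from a semigroup $B$ and an idempotent endomorphism $\varepsilon:B\to B$ by taking $|S|=B$ and $\beta^S(b)=\varepsilon(b)^{(0)}$ for $b\in B$ (i.e. $\beta^S=q_0\circ\varepsilon$ with $q_0:B\to B\amalg B$ the first coprojection). The corresponding representable functor sends a semigroup $A$ to the set of homomorphisms $h:B\to A$ with multiplication $h\cdot h'=h\circ\varepsilon$.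
   Context: $\mathbf{Sgp}$ is the variety of semigroups. A cosemigroup in $\mathbf{Sgp}$ is a semigroup $|S|$ with a homomorphism $\beta^S:|S|\to|S|\amalg|S|$ into the free product of two copies of itself such that, for every semigroup $A$, $\mathrm{Hom}(|S|,A)$ with multiplication $g\cdot h=(g\vee h)\circ\beta^S$ (where $g\vee h$ restricts to $g,h$ on the two copies) is a semigroup. For $u\in|S|$, $u^{(0)}$ and $u^{(1)}$ denote its images under the two coprojections $|S|\to|S|\amalg|S|$. $\mathrm{Coalg}(\mathbf{Sgp},\mathbf{Sgp})$ is the category of cosemigroups with morphisms the homomorphisms $f$ with $(f\amalg f)\circ\beta^S=\beta^{S'}\circ f$; it has a final object $R$ with underlying semigroup as displayed (its co-operation being $\beta^R(x_{00})=x_{00}^{(0)}$, $\beta^R(x_{11})=x_{11}^{(1)}$, $\beta^R(p_i)=p_i^{(0)}(x_{00}^{(1)}x_{11}^{(0)})^ip_i^{(1)}$, $\beta^R(q_i)=q_i^{(1)}(x_{11}^{(0)}x_{00}^{(1)})^iq_i^{(0)}$). *)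

theory Defs
  imports "HOL-Algebra.Group"
begin

section \<open>Semigroups (carrier + binary operation; the one field is ignored)\<close>

definition is_semigroup :: "('a, 'b) monoid_scheme \<Rightarrow> bool" where
  "is_semigroup G \<longleftrightarrow>
     (\<forall>x\<in>carrier G. \<forall>y\<in>carrier G. x \<otimes>\<^bsub>G\<^esub> y \<in> carrier G) \<and>
     (\<forall>x\<in>carrier G. \<forall>y\<in>carrier G. \<forall>z\<in>carrier G.
        (x \<otimes>\<^bsub>G\<^esub> y) \<otimes>\<^bsub>G\<^esub> z = x \<otimes>\<^bsub>G\<^esub> (y \<otimes>\<^bsub>G\<^esub> z))"

section \<open>Free product (coproduct in Sgp) of copies of G indexed by 'i, as reduced words\<close>

text \<open>The letter (i, a) is the image of a under the i-th coprojection.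
  For binary free products we use tags bool: False = copy 0, True = copy 1.\<close>

definition fp_carrier :: "('a, 'b) monoid_scheme \<Rightarrow> ('i \<times> 'a) list set" where
  "fp_carrier G = {w. w \<noteq> [] \<and> (\<forall>x\<in>set w. snd x \<in> carrier G) \<and>
      (\<forall>k. Suc k < length w \<longrightarrow> fst (w ! k) \<noteq> fst (w ! Suc k))}"

definition fp_mult :: "('a, 'b) monoid_scheme \<Rightarrow> ('i \<times> 'a) list \<Rightarrow> ('i \<times> 'a) list \<Rightarrow> ('i \<times> 'a) list" where
  "fp_mult G w v =
     (if w = [] then v else if v = [] then w
      else if fst (last w) = fst (hd v)
        then butlast w @ [(fst (hd v), snd (last w) \<otimes>\<^bsub>G\<^esub> snd (hd v))] @ tl v
        else w @ v)"

definition fp :: "('a, 'b) monoid_scheme \<Rightarrow> ('i \<times> 'a) list monoid" where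
  "fp G = \<lparr>carrier = fp_carrier G, mult = fp_mult G, one = undefined\<rparr>"

text \<open>Copairing: the homomorphism out of the free product determined by the maps F i on the
  i-th copy, evaluated on a word.\<close>

fun fp_eval :: "('c, 'd) monoid_scheme \<Rightarrow> ('i \<Rightarrow> 'a \<Rightarrow> 'c) \<Rightarrow> ('i \<times> 'a) list \<Rightarrow> 'c" where
  "fp_eval A F [] = undefined"
| "fp_eval A F [x] = F (fst x) (snd x)"
| "fp_eval A F (x # y # ys) = F (fst x) (snd x) \<otimes>\<^bsub>A\<^esub> fp_eval A F (y # ys)"

definition copair :: "('c, 'd) monoid_scheme \<Rightarrow> ('a \<Rightarrow> 'c) \<Rightarrow> ('a \<Rightarrow> 'c) \<Rightarrow> (bool \<times> 'a) list \<Rightarrow> 'c" where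
  "copair A g h = fp_eval A (\<lambda>i. if i then h else g)"

text \<open>Induced multiplication on Hom(|S|, A): g \<cdot> h = (g \<or> h) \<circ> \<beta>.\<close>
definition hmul :: "('c, 'd) monoid_scheme \<Rightarrow> ('a \<Rightarrow> (bool \<times> 'a) list) \<Rightarrow> ('a \<Rightarrow> 'c) \<Rightarrow> ('a \<Rightarrow> 'c) \<Rightarrow> 'a \<Rightarrow> 'c" where
  "hmul A \<beta> g h = (\<lambda>x. copair A g h (\<beta> x))"

text \<open>The test semigroups A range over all semigroups whose carrier lives in the type
  (nat \<times> 'a) list; this type contains the free product of (countably many, in particular three)
  copies of S, which is the universal test object, so this is equivalent to quantifying over all
  semigroups.\<close>

definition cosemigroup :: "'a monoid \<Rightarrow> ('a \<Rightarrow> (bool \<times> 'a) list) \<Rightarrow> bool" where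
  "cosemigroup S \<beta> \<longleftrightarrow> is_semigroup S \<and> \<beta> \<in> hom S (fp S) \<and>
     (\<forall>A :: (nat \<times> 'a) list monoid. is_semigroup A \<longrightarrow>
        (\<forall>g\<in>hom S A. \<forall>h\<in>hom S A. \<forall>k\<in>hom S A. \<forall>x\<in>carrier S.
           hmul A \<beta> (hmul A \<beta> g h) k x = hmul A \<beta> g (hmul A \<beta> h k) x))"

text \<open>Morphisms of cosemigroups: homomorphisms f with (f \<amalg> f) \<circ> \<beta> = \<beta>' \<circ> f, where f \<amalg> f is the
  copairing of (coprojection_i \<circ> f).\<close>

definition cosg_morph :: "'a monoid \<Rightarrow> ('a \<Rightarrow> (bool \<times> 'a) list) \<Rightarrow> 'b monoid \<Rightarrow> ('b \<Rightarrow> (bool \<times> 'b) list) \<Rightarrow> ('a \<Rightarrow> 'b) \<Rightarrow> bool" where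
  "cosg_morph S \<beta> S' \<beta>' f \<longleftrightarrow> f \<in> hom S S' \<and>
     (\<forall>x\<in>carrier S. fp_eval (fp S' :: (bool \<times> 'b) list monoid) (\<lambda>i a. [(i, f a)]) (\<beta> x) = \<beta>' (f x))"

definition cosg_iso :: "'a monoid \<Rightarrow> ('a \<Rightarrow> (bool \<times> 'a) list) \<Rightarrow> 'b monoid \<Rightarrow> ('b \<Rightarrow> (bool \<times> 'b) list) \<Rightarrow> bool" where
  "cosg_iso S \<beta> S' \<beta>' \<longleftrightarrow> (\<exists>f g. cosg_morph S \<beta> S' \<beta>' f \<and> cosg_morph S' \<beta>' S \<beta> g \<and>
     (\<forall>x\<in>carrier S. g (f x) = x) \<and> (\<forall>y\<in>carrier S'. f (g y) = y))"

section \<open>The final cosemigroup R\<close>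

datatype rgen = X00 | X11 | P nat | Q nat

inductive rrel :: "rgen list \<Rightarrow> rgen list \<Rightarrow> bool" where
  "rrel [X00, X00] [X00]"
| "rrel [X11, X11] [X11]"
| "rrel [X00, P i] [P i]"
| "rrel [P i, X11] [P i]"
| "rrel [X11, Q i] [Q i]"
| "rrel [Q i, X00] [Q i]"

inductive rcong :: "rgen list \<Rightarrow> rgen list \<Rightarrow> bool" where
  rc_base: "rrel u v \<Longrightarrow> rcong (x @ u @ y) (x @ v @ y)"
| rc_refl: "rcong w w"
| rc_sym: "rcong u v \<Longrightarrow> rcong v u"
| rc_trans: "rcong u v \<Longrightarrow> rcong v w \<Longrightarrow> rcong u w"

definition R_class :: "rgen list \<Rightarrow> rgen list set" where
  "R_class w = {v. rcong w v}"

definition R_sgp :: "rgen list set monoid" where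
  "R_sgp = \<lparr>carrier = {R_class w | w. w \<noteq> []},
            mult = (\<lambda>C D. {w. \<exists>c\<in>C. \<exists>d\<in>D. rcong (c @ d) w}),
            one = undefined\<rparr>"

fun fp_pow :: "('a, 'b) monoid_scheme \<Rightarrow> ('i \<times> 'a) list \<Rightarrow> nat \<Rightarrow> ('i \<times> 'a) list" where
  "fp_pow G w 0 = []"
| "fp_pow G w (Suc n) = fp_mult G w (fp_pow G w n)"

text \<open>Images of the generators under \<beta>^R (False = superscript (0), True = superscript (1));
  the empty word [] acts as a formal identity for fp_mult, used for the power 0.\<close>
fun R_beta_gen :: "rgen \<Rightarrow> (bool \<times> rgen list set) list" where
  "R_beta_gen X00 = [(False, R_class [X00])]"
| "R_beta_gen X11 = [(True, R_class [X11])]"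
| "R_beta_gen (P i) =
     fp_mult R_sgp (fp_mult R_sgp [(False, R_class [P i])]
        (fp_pow R_sgp (fp_mult R_sgp [(True, R_class [X00])] [(False, R_class [X11])]) i))
      [(True, R_class [P i])]"
| "R_beta_gen (Q i) =
     fp_mult R_sgp (fp_mult R_sgp [(True, R_class [Q i])]
        (fp_pow R_sgp (fp_mult R_sgp [(False, R_class [X11])] [(True, R_class [X00])]) i))
      [(False, R_class [Q i])]"

definition R_beta :: "rgen list set \<Rightarrow> (bool \<times> rgen list set) list" where
  "R_beta C = fp_eval (fp R_sgp :: (bool \<times> rgen list set) list monoid)
                 (\<lambda>_ g. R_beta_gen g) (map (\<lambda>g. (False, g)) (SOME w. w \<noteq> [] \<and> C = R_class w))"

end

theory Submission
  imports Defs
begin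

lemma rrel_X00: "rrel u v \<Longrightarrow> (set u \<subseteq> {X00}) = (set v \<subseteq> {X00})"
  by (induction rule: rrel.induct) auto

lemma rcong_X00: "rcong u v \<Longrightarrow> (set u \<subseteq> {X00}) = (set v \<subseteq> {X00})"
proof (induction rule: rcong.induct)
  case (rc_base u v x y)
  then show ?case using rrel_X00[OF rc_base] by auto
qed auto

definition alt :: "('i \<times> 'a) list \<Rightarrow> bool" where
  "alt w \<longleftrightarrow> (\<forall>k. Suc k < length w \<longrightarrow> fst (w ! k) \<noteq> fst (w ! Suc k))"

lemma alt_tail: "alt (x # y # ys) \<Longrightarrow> alt (y # ys) \<and> fst x \<noteq> fst y"
  unfolding alt_def
proof (intro conjI allI impI)
  fix k assume a: "\<forall>k. Suc k < length (x # y # ys) \<longrightarrow> fst ((x # y # ys) ! k) \<noteq> fst ((x # y # ys) ! Suc k)"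
    and "Suc k < length (y # ys)"
  then show "fst ((y # ys) ! k) \<noteq> fst ((y # ys) ! Suc k)" using a[rule_format, of "Suc k"] by simp
next
  assume a: "\<forall>k. Suc k < length (x # y # ys) \<longrightarrow> fst ((x # y # ys) ! k) \<noteq> fst ((x # y # ys) ! Suc k)"
  show "fst x \<noteq> fst y" using a[rule_format, of 0] by simp
qed

lemma eval_alt:
  "alt w \<Longrightarrow> w \<noteq> [] \<Longrightarrow> fp_eval (fp G) (\<lambda>i a. [(i, c a)]) w = map (\<lambda>(i,a). (i, c a)) w"
proof (induction w rule: induct_list012)
  case (2 x)
  then show ?case by (cases x) auto
next
  case (3 x y ys)
  from alt_tail[OF 3(3)] have h: "alt (y # ys)" "fst x \<noteq> fst y" by auto
  have "fp_eval (fp G) (\<lambda>i a. [(i, c a)]) (x # y # ys)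
      = fp_mult G [(fst x, c (snd x))] (map (\<lambda>(i,a). (i, c a)) (y # ys))"
    using 3(2)[OF h(1)] by (simp add: fp_def)
  also have "\<dots> = map (\<lambda>(i,a). (i, c a)) (x # y # ys)"
    using h(2) by (cases x, cases y) (auto simp: fp_mult_def)
  finally show ?case .
qed auto

lemma eval_false:
  "w \<noteq> [] \<Longrightarrow> (\<forall>z\<in>set w. \<exists>a. F (fst z) (snd z) = [(False, a)]) \<Longrightarrow>
   \<exists>a. fp_eval (fp G) F w = [(False, a)]"
proof (induction w rule: induct_list012)
  case (3 x y ys)
  then obtain a b where "F (fst x) (snd x) = [(False, a)]" "fp_eval (fp G) F (y # ys) = [(False, b)]"
    by auto
  then show ?case by (auto simp: fp_def fp_mult_def)
qed auto

lemma R_beta_X00: "\<exists>a. R_beta (R_class [X00]) = [(False, a)]"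
proof -
  define w where "w = (SOME w. w \<noteq> [] \<and> R_class [X00] = R_class w)"
  have "\<exists>w. w \<noteq> [] \<and> R_class [X00] = R_class w" by blast
  then have w: "w \<noteq> [] \<and> R_class [X00] = R_class w" unfolding w_def by (rule someI_ex)
  then have "w \<in> R_class [X00]" by (auto simp: R_class_def intro: rc_refl)
  then have "rcong [X00] w" by (simp add: R_class_def)
  then have sw: "set w \<subseteq> {X00}" using rcong_X00 by fastforce
  have "\<exists>a. fp_eval (fp R_sgp :: (bool \<times> rgen list set) list monoid)
                 (\<lambda>_ g. R_beta_gen g) (map (\<lambda>g. (False, g)) w) = [(False, a)]"
    apply (rule eval_false)
    using w sw by auto
  then show ?thesis unfolding R_beta_def w_def .
qed

theorem proposition11p7:
  fixes S :: "'a monoid" and \<beta> :: "'a \<Rightarrow> (bool \<times> 'a) list"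
  assumes "cosemigroup S \<beta>"
    and "\<exists>f. cosg_morph S \<beta> R_sgp R_beta f \<and> (\<forall>x\<in>carrier S. f x = R_class [X00])"
  shows "\<exists>(B :: 'a monoid) \<epsilon>. is_semigroup B \<and> \<epsilon> \<in> hom B B \<and> (\<forall>b\<in>carrier B. \<epsilon> (\<epsilon> b) = \<epsilon> b) \<and>
           cosemigroup B (\<lambda>b. [(False, \<epsilon> b)]) \<and>
           cosg_iso S \<beta> B (\<lambda>b. [(False, \<epsilon> b)]) \<and>
           (\<forall>A :: ('c, 'd) monoid_scheme. is_semigroup A \<longrightarrow>
              (\<forall>h\<in>hom B A. \<forall>h'\<in>hom B A. \<forall>b\<in>carrier B.
                 hmul A (\<lambda>b. [(False, \<epsilon> b)]) h h' b = h (\<epsilon> b)))"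
proof -
  obtain f where f: "cosg_morph S \<beta> R_sgp R_beta f" "\<forall>x\<in>carrier S. f x = R_class [X00]"
    using assms(2) by blast
  have sg: "is_semigroup S" and bh: "\<beta> \<in> hom S (fp S)" using assms(1) by (auto simp: cosemigroup_def)
  define \<epsilon> where "\<epsilon> x = snd (hd (\<beta> x))" for x
  have bx: "\<beta> x = [(False, \<epsilon> x)] \<and> \<epsilon> x \<in> carrier S" if x: "x \<in> carrier S" for x
  proof -
    have fc: "\<beta> x \<in> fp_carrier S" using bh x by (auto simp: hom_def fp_def)
    then have alt: "alt (\<beta> x)" and ne: "\<beta> x \<noteq> []" and sc: "\<forall>z\<in>set (\<beta> x). snd z \<in> carrier S"
      by (auto simp: fp_carrier_def alt_def)
    have "fp_eval (fp R_sgp :: (bool \<times> rgen list set) list monoid) (\<lambda>i a. [(i, f a)]) (\<beta> x) = R_beta (f x)"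
      using f(1) x by (auto simp: cosg_morph_def)
    then have "map (\<lambda>(i,a). (i, f a)) (\<beta> x) = R_beta (R_class [X00])"
      using eval_alt[OF alt ne] f(2) x by metis
    then obtain a where "map (\<lambda>(i,a). (i, f a)) (\<beta> x) = [(False, a)]" using R_beta_X00 by metis
    then obtain z where "\<beta> x = [z]" "fst z = False" by (cases "\<beta> x") auto
    then show ?thesis using sc unfolding \<epsilon>_def by (cases z) auto
  qed
  have emul: "\<epsilon> (x \<otimes>\<^bsub>S\<^esub> y) = \<epsilon> x \<otimes>\<^bsub>S\<^esub> \<epsilon> y" if "x \<in> carrier S" "y \<in> carrier S" for x y
  proof -
    have "\<beta> (x \<otimes>\<^bsub>S\<^esub> y) = fp_mult S (\<beta> x) (\<beta> y)" using bh that by (auto simp: hom_def fp_def)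
    also have "\<dots> = [(False, \<epsilon> x \<otimes>\<^bsub>S\<^esub> \<epsilon> y)]"
      by (subst bx[OF that(1)], subst bx[OF that(2)]) (simp add: fp_mult_def)
    finally show ?thesis unfolding \<epsilon>_def by simp
  qed
  have eh: "\<epsilon> \<in> hom S S" using bx emul by (auto simp: hom_def)
  \<comment> \<open>idempotence via a test semigroup\<close>
  define A :: "(nat \<times> 'a) list monoid" where
    "A = \<lparr>carrier = (\<lambda>a. [(0::nat, a)]) ` carrier S,
          mult = (\<lambda>u v. [(0, snd (hd u) \<otimes>\<^bsub>S\<^esub> snd (hd v))]), one = undefined\<rparr>"
  have sgS: "\<forall>x\<in>carrier S. \<forall>y\<in>carrier S. x \<otimes>\<^bsub>S\<^esub> y \<in> carrier S"
    "\<forall>x\<in>carrier S. \<forall>y\<in>carrier S. \<forall>z\<in>carrier S. (x \<otimes>\<^bsub>S\<^esub> y) \<otimes>\<^bsub>S\<^esub> z = x \<otimes>\<^bsub>S\<^esub> (y \<otimes>\<^bsub>S\<^esub> z)"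
    using sg by (auto simp: is_semigroup_def)
  have sA: "is_semigroup A" using sgS by (auto simp: is_semigroup_def A_def)
  define g :: "'a \<Rightarrow> (nat \<times> 'a) list" where "g a = [(0::nat, a)]" for a
  have gh: "g \<in> hom S A" by (auto simp: hom_def A_def g_def)
  have hm: "hmul A' \<beta> h h' x = h (\<epsilon> x)" if "x \<in> carrier S" for A' :: "('e,'f) monoid_scheme" and h h' x
    using bx[OF that] by (simp add: hmul_def copair_def)
  have idem: "\<epsilon> (\<epsilon> x) = \<epsilon> x" if x: "x \<in> carrier S" for x
  proof -
    have "hmul A \<beta> (hmul A \<beta> g g) g x = hmul A \<beta> g (hmul A \<beta> g g) x"
      using assms(1) sA gh x by (auto simp: cosemigroup_def)
    moreover have "hmul A \<beta> (hmul A \<beta> g g) g x = g (\<epsilon> (\<epsilon> x))"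
      using hm[OF x, of A "hmul A \<beta> g g" g] hm[of "\<epsilon> x" A g g] bx[OF x] by simp
    moreover have "hmul A \<beta> g (hmul A \<beta> g g) x = g (\<epsilon> x)"
      using hm[OF x, of A g "hmul A \<beta> g g"] by simp
    ultimately have "g (\<epsilon> (\<epsilon> x)) = g (\<epsilon> x)" by simp
    then show ?thesis by (simp add: g_def)
  qed
  have hm2: "hmul A' (\<lambda>b. [(False, \<epsilon> b)]) h h' x = h (\<epsilon> x)" for A' :: "('e,'f) monoid_scheme" and h h' x
    by (simp add: hmul_def copair_def)
  have b'h: "(\<lambda>b. [(False, \<epsilon> b)]) \<in> hom S (fp S)"
    using bx emul by (auto simp: hom_def fp_def fp_carrier_def fp_mult_def)
  have cos: "cosemigroup S (\<lambda>b. [(False, \<epsilon> b)])"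
    unfolding cosemigroup_def using sg b'h by (simp add: hm2 idem bx)
  have idh: "id \<in> hom S S" by (auto simp: hom_def)
  have m1: "cosg_morph S \<beta> S (\<lambda>b. [(False, \<epsilon> b)]) id"
    unfolding cosg_morph_def using idh bx by simp
  have m2: "cosg_morph S (\<lambda>b. [(False, \<epsilon> b)]) S \<beta> id"
    unfolding cosg_morph_def using idh bx by simp
  have iso: "cosg_iso S \<beta> S (\<lambda>b. [(False, \<epsilon> b)])"
    unfolding cosg_iso_def using m1 m2 by (intro exI[of _ id]) auto
  show ?thesis
    apply (rule exI[of _ S], rule exI[of _ \<epsilon>])
    using sg eh idem cos iso hm2 by blast
qed

end
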